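(* Let $\mathcal{O}=(G,x,y)$ be a regular origami. Suppose that for every prime $p$ at least one of the following holds: (1) $\gcd\big(p,\operatorname{ord}(y)\cdot\operatorname{ord}(yx)\big)=1$; or (2) there exist $m_1,m_2\in\mathbb{Z}_{\ge 0}$ with $m_1\not\equiv m_2 \pmod p$ and $\gcd\big(p,\operatorname{ord}(xy^{-m_1})\cdot\operatorname{ord}(xy^{-m_2})\big)=1$. Then the Veech group $\mathrm{SL}(\mathcal{O})$ is a totally non-congruence group.
   Context: A regular origami $(G,x,y)$ is given by a finite group $G$ generated by two elements $x,y$: it is the translation surface obtained from unit squares indexed by the elements $g\in G$, where the right edge of square $g$ is glued to the left edge of square $gx$ and the top edge of square $g$ is glued to the bottom edge of square $gy$ (a normal cover of the torus with deck group $G$). Two regular origamis $(G,x,y)$, $(G',x',y')$ are identified if there is a group isomorphism $G\to G'$ with $x\mapsto x'$, $y\mapsto y'$. The group $\mathrm{SL}(2,\mathbb{Z})$ acts on regular origamis via $S\cdot(G,x,y)=(G,y^{-1},x)$ and $T\cdot(G,x,y)=(G,x,yx^{-1})$, where $S=\begin{pmatrix}0&-1\\1&0\end{pmatrix}$, $T=\begin{pmatrix}1&1\\0&1\end{pmatrix}$ generate $\mathrm{SL}(2,\mathbb{Z})$; this is the action by affine shearing of the square tiling. The Veech group $\mathrm{SL}(\mathcal{O})$ of a (nontrivial) regular origami is the stabilizer of $\mathcal{O}$ under this action; it is a finite index subgroup of $\mathrm{SL}(2,\mathbb{Z})$. A finite index subgroup $\Gamma\le\mathrm{SL}(2,\mathbb{Z})$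 is a totally non-congruence group if for every integer $n\ge 1$ the reduction map $\mathrm{SL}(2,\mathbb{Z})\to\mathrm{SL}(2,\mathbb{Z}/n\mathbb{Z})$ restricted to $\Gamma$ is surjective. *)

theory Defs
  imports "HOL-Algebra.Algebra" "HOL-Number_Theory.Number_Theory"
begin

text \<open>2x2 integer matrices [[a,b],[c,d]] are represented as tuples (a,b,c,d).\<close>
type_synonym mat2 = "int \<times> int \<times> int \<times> int"

fun mmul :: "mat2 \<Rightarrow> mat2 \<Rightarrow> mat2" where
  "mmul (a,b,c,e) (a2,b2,c2,e2) = (a * a2 + b * c2, a * b2 + b * e2, c * a2 + e * c2, c * b2 + e * e2)"

definition SL2Z :: "mat2 set" where
  "SL2Z = {M. case M of (a,b,c,e) \<Rightarrow> a * e - b * c = 1}"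

datatype gen = GS | GSi | GT | GTi

fun gen_mat :: "gen \<Rightarrow> mat2" where
  "gen_mat GS  = (0, -1, 1, 0)"
| "gen_mat GSi = (0, 1, -1, 0)"
| "gen_mat GT  = (1, 1, 0, 1)"
| "gen_mat GTi = (1, -1, 0, 1)"

definition word_mat :: "gen list \<Rightarrow> mat2" where
  "word_mat w = foldr (\<lambda>g M. mmul (gen_mat g) M) w (1,0,0,1)"

fun gen_act :: "('a, 'b) monoid_scheme \<Rightarrow> gen \<Rightarrow> 'a \<times> 'a \<Rightarrow> 'a \<times> 'a" where
  "gen_act G GS  (x,y) = (inv\<^bsub>G\<^esub> y, x)"
| "gen_act G GSi (x,y) = (y, inv\<^bsub>G\<^esub> x)"
| "gen_act G GT  (x,y) = (x, y \<otimes>\<^bsub>G\<^esub> inv\<^bsub>G\<^esub> x)"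
| "gen_act G GTi (x,y) = (x, y \<otimes>\<^bsub>G\<^esub> x)"

text \<open>A word g1...gk acts as g1.(g2.(...(gk.O))), matching the matrix g1*...*gk.\<close>
definition word_act :: "('a, 'b) monoid_scheme \<Rightarrow> gen list \<Rightarrow> 'a \<times> 'a \<Rightarrow> 'a \<times> 'a" where
  "word_act G w p = foldr (gen_act G) w p"

definition regular_origami :: "('a, 'b) monoid_scheme \<Rightarrow> 'a \<Rightarrow> 'a \<Rightarrow> bool" where
  "regular_origami G x y \<longleftrightarrow> group G \<and> finite (carrier G) \<and> x \<in> carrier G \<and> y \<in> carrier G
     \<and> generate G {x, y} = carrier G"

definition origami_equiv :: "('a, 'b) monoid_scheme \<Rightarrow> 'a \<times> 'a \<Rightarrow> 'a \<times> 'a \<Rightarrow> bool" where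
  "origami_equiv G p q \<longleftrightarrow> (\<exists>\<phi> \<in> iso G G. \<phi> (fst p) = fst q \<and> \<phi> (snd p) = snd q)"

definition veech_group :: "('a, 'b) monoid_scheme \<Rightarrow> 'a \<Rightarrow> 'a \<Rightarrow> mat2 set" where
  "veech_group G x y = {A \<in> SL2Z. \<exists>w. word_mat w = A \<and> origami_equiv G (word_act G w (x,y)) (x,y)}"

definition totally_non_congruence :: "mat2 set \<Rightarrow> bool" where
  "totally_non_congruence \<Gamma> \<longleftrightarrow>
     (\<forall>n::int. n \<ge> 1 \<longrightarrow> (\<forall>a b c e. [a * e - b * c = 1] (mod n) \<longrightarrow>
        (\<exists>(a1,b1,c1,d1) \<in> \<Gamma>. [a1 = a] (mod n) \<and> [b1 = b] (mod n) \<and> [c1 = c] (mod n) \<and> [d1 = e] (mod n))))"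

end

theory Submission
  imports Defs
begin

definition mT :: "int \<Rightarrow> mat2" where "mT t = (1,t,0,1)"
definition mL :: "int \<Rightarrow> mat2" where "mL t = (1,0,t,1)"
definition mI :: mat2 where "mI = (1,0,0,1)"
definition mS :: mat2 where "mS = (0,-1,1,0)"
definition mSi :: mat2 where "mSi = (0,1,-1,0)"
fun det2 :: "mat2 \<Rightarrow> int" where "det2 (a,b,c,e) = a * e - b * c"
fun mcong :: "int \<Rightarrow> mat2 \<Rightarrow> mat2 \<Rightarrow> bool" where
  "mcong q (a,b,c,e) (a',b',c',e') \<longleftrightarrow> [a = a'] (mod q) \<and> [b = b'] (mod q) \<and> [c = c'] (mod q) \<and> [e = e'] (mod q)"

lemma mmul_assoc: "mmul (mmul A B) C = mmul A (mmul B C)"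
  by (cases A; cases B; cases C) (simp add: algebra_simps)

lemma mmul_I [simp]: "mmul mI A = A" "mmul A mI = A"
  by (cases A; simp add: mI_def)+

lemma det2_mmul: "det2 (mmul A B) = det2 A * det2 B"
  by (cases A; cases B) (simp add: algebra_simps)

lemma mcong_refl [simp]: "mcong q A A" by (cases A) auto
lemma mcong_sym: "mcong q A B \<Longrightarrow> mcong q B A" by (cases A; cases B) (auto simp: cong_sym)
lemma mcong_trans: "mcong q A B \<Longrightarrow> mcong q B C \<Longrightarrow> mcong q A C"
  by (cases A; cases B; cases C) (auto elim: cong_trans)
lemma mcong_mmul: "mcong q A A' \<Longrightarrow> mcong q B B' \<Longrightarrow> mcong q (mmul A B) (mmul A' B')"
  by (cases A; cases B; cases A'; cases B') (auto intro!: cong_add cong_mult)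
lemma mcong_dvd: "mcong q A B \<Longrightarrow> q' dvd q \<Longrightarrow> mcong q' A B"
  by (cases A; cases B) (auto intro: cong_dvd_modulus)
lemma mcong_coprime: "coprime q1 q2 \<Longrightarrow> mcong q1 A B \<Longrightarrow> mcong q2 A B \<Longrightarrow> mcong (q1*q2) A B"
  for q1 q2 :: int
  by (cases A; cases B) (auto intro: coprime_cong_mult)
lemma mcong_1 [simp]: "mcong 1 A B" by (cases A; cases B) auto

lemma mcong_dvdI: "q dvd (a - a') \<Longrightarrow> q dvd (b - b') \<Longrightarrow> q dvd (c - c') \<Longrightarrow> q dvd (e - e') \<Longrightarrow>
   mcong q (a,b,c,e) (a',b',c',e')"
  by (simp add: cong_iff_dvd_diff)

lemma mT_add: "mmul (mT s) (mT t) = mT (s+t)" by (simp add: mT_def)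
lemma mS_eq: "mS = mmul (mmul (mT (-1)) (mL 1)) (mT (-1))" by (simp add: mS_def mT_def mL_def)

lemma mcong_mT: "[s = t] (mod q) \<Longrightarrow> mcong q (mT s) (mT t)" by (simp add: mT_def)

lemma core_L:
  fixes Good :: "mat2 \<Rightarrow> bool" and q \<delta> s :: int
  assumes mult: "\<And>A B. Good A \<Longrightarrow> Good B \<Longrightarrow> Good (mmul A B)"
  and cg: "\<And>A B. mcong q A B \<Longrightarrow> Good A \<Longrightarrow> Good B"
  and gT: "\<And>t. Good (mT t)"
  and gU: "\<And>t. Good (mmul (mmul (mL \<delta>) (mT t)) (mL (-\<delta>)))"
  and cop: "coprime \<delta> q"
  shows "Good (mL s)"
proof -
  obtain u where u: "[\<delta> * u = 1] (mod q)" using cong_solve_coprime_int[OF cop] by blast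
  then obtain k where k: "1 = \<delta> * u + q * k" by (auto simp: cong_iff_lin)
  let ?X = "mmul (mmul (mT (-u)) (mmul (mmul (mL \<delta>) (mT (- s * u^2))) (mL (-\<delta>)))) (mT u)"
  have "Good ?X" using mult gT gU by (metis minus_minus)
  moreover have "mcong q ?X (mL s)"
    unfolding mT_def mL_def mmul.simps
    apply (rule mcong_dvdI)
    apply (rule dvdI[where k="s * u^2 * \<delta> * k"]) using k apply Groebner_Basis.algebra
    apply (rule dvdI[where k="- s * u^2 * q * k^2"]) using k apply Groebner_Basis.algebra
    apply (rule dvdI[where k="s * (q * k^2 - 2 * k)"]) using k apply Groebner_Basis.algebra
    apply (rule dvdI[where k="- \<delta> * s * u^2 * k"]) using k apply Groebner_Basis.algebra
    done
  ultimately show ?thesis using cg by blast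
qed

lemma core_all:
  fixes Good :: "mat2 \<Rightarrow> bool" and q :: int
  assumes mult: "\<And>A B. Good A \<Longrightarrow> Good B \<Longrightarrow> Good (mmul A B)"
  and cg: "\<And>A B. mcong q A B \<Longrightarrow> Good A \<Longrightarrow> Good B"
  and gT: "\<And>t. Good (mT t)"
  and gL: "\<And>t. Good (mL t)"
  and det: "[det2 M = 1] (mod q)"
  shows "Good M"
proof -
  have gS: "Good mS" unfolding mS_eq using mult gT gL by blast
  have gI: "Good mI" using gT[of 0] by (simp add: mT_def mI_def)
  have euclid: "\<exists>N g b' e'. Good N \<and> det2 N = 1 \<and> (a,b,c,e) = mmul N (g,b',0,e')" for a b c e
  proof (induction c arbitrary: a b e rule: measure_induct_rule[where f="\<lambda>c. nat \<bar>c\<bar>"])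
    case (less c)
    show ?case
    proof (cases "c = 0")
      case True
      then show ?thesis using gI by (intro exI[of _ mI]) (auto simp: mI_def)
    next
      case False
      define t where "t = a div c"
      define a' where "a' = a mod c"
      define b2 where "b2 = b - t * e"
      have "nat \<bar>-a'\<bar> < nat \<bar>c\<bar>" using abs_mod_less[OF False, of a] False by (simp add: a'_def)
      from less[OF this, of c e "-b2"] obtain N g b' e' where
        N: "Good N" "det2 N = 1" "(c, e, -a', -b2) = mmul N (g,b',0,e')" by blast
      have "(a,b,c,e) = mmul (mmul (mT t) mS) (c, e, -a', -b2)"
        using div_mult_mod_eq[of a c] by (simp add: mT_def mS_def t_def a'_def b2_def algebra_simps)
      also have "\<dots> = mmul (mmul (mmul (mT t) mS) N) (g,b',0,e')" by (simp add: N(3) mmul_assoc)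
      finally have eq: "(a,b,c,e) = mmul (mmul (mmul (mT t) mS) N) (g,b',0,e')" .
      have "Good (mmul (mmul (mT t) mS) N)" using N gS gT mult by blast
      moreover have "det2 (mmul (mmul (mT t) mS) N) = 1" using N by (simp add: det2_mmul mT_def mS_def)
      ultimately show ?thesis using eq by blast
    qed
  qed
  obtain a b c e where M: "M = (a,b,c,e)" by (cases M) auto
  obtain N g b' e' where N: "Good N" "det2 N = 1" "(a,b,c,e) = mmul N (g,b',0,e')" using euclid by blast
  have "det2 M = g * e'" unfolding M N(3) det2_mmul N(2) by simp
  with det obtain k where k: "1 = g * e' + q * k" by (auto simp: cong_iff_lin)
  let ?P = "mmul (mmul (mmul (mmul (mT g) (mL (-e'))) (mT g)) mS) (mT (b' * e'))"
  have "Good ?P" by (intro mult gT gL gS)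
  moreover have "mcong q ?P (g,b',0,e')"
    unfolding mT_def mL_def mS_def mmul.simps
    apply (rule mcong_dvdI)
    apply (rule dvdI[where k="g * k"]) using k apply Groebner_Basis.algebra
    apply (rule dvdI[where k="- b' * q * k^2 - k"]) using k apply Groebner_Basis.algebra
    apply (rule dvdI[where k="k"]) using k apply Groebner_Basis.algebra
    apply (rule dvdI[where k="k * b' * e'"]) using k apply Groebner_Basis.algebra
    done
  ultimately have "Good (g,b',0,e')" using cg by blast
  then show ?thesis using N mult by (simp add: M)
qed

lemma word_mat_Nil [simp]: "word_mat [] = mI" by (simp add: word_mat_def mI_def)
lemma word_mat_Cons [simp]: "word_mat (g # w) = mmul (gen_mat g) (word_mat w)" by (simp add: word_mat_def)
lemma word_mat_append: "word_mat (w1 @ w2) = mmul (word_mat w1) (word_mat w2)"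
  by (induction w1) (simp_all add: mmul_assoc)
lemma word_mat_rep_T: "word_mat (replicate n GT) = mT (int n)"
  by (induction n) (simp_all add: mT_def mI_def)
lemma word_mat_rep_Ti: "word_mat (replicate n GTi) = mT (- int n)"
  by (induction n) (simp_all add: mT_def mI_def)
lemma gen_mat_simps: "gen_mat GS = mS" "gen_mat GSi = mSi" "gen_mat GT = mT 1" "gen_mat GTi = mT (-1)"
  by (simp_all add: mS_def mSi_def mT_def)
lemma det_word: "det2 (word_mat w) = 1"
  by (induction w) (auto simp: det2_mmul mI_def elim: gen_mat.elims gen.exhaust, case_tac a, auto)
lemma word_act_append: "word_act G (w1 @ w2) p = word_act G w1 (word_act G w2 p)"
  by (simp add: word_act_def)
lemma word_act_Cons: "word_act G (g # w) p = gen_act G g (word_act G w p)"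
  by (simp add: word_act_def)
lemma word_act_Nil: "word_act G [] p = p"
  by (simp add: word_act_def)

lemma (in group) act_rep_T:
  "a \<in> carrier G \<Longrightarrow> b \<in> carrier G \<Longrightarrow> word_act G (replicate n GT) (a,b) = (a, b \<otimes> (inv a) [^] n)"
  by (induction n) (simp_all add: word_act_Cons word_act_Nil m_assoc)
lemma (in group) act_rep_Ti:
  "a \<in> carrier G \<Longrightarrow> b \<in> carrier G \<Longrightarrow> word_act G (replicate n GTi) (a,b) = (a, b \<otimes> a [^] n)"
  by (induction n) (simp_all add: word_act_Cons word_act_Nil m_assoc)

definition wE :: "nat \<Rightarrow> nat \<Rightarrow> gen list" where
  "wE m n = [GSi] @ replicate m GT @ [GS] @ replicate n GT @ [GSi] @ replicate m GTi @ [GS]"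
definition wA :: "nat \<Rightarrow> gen list" where
  "wA n = [GSi] @ replicate n GT @ [GS]"
definition wB :: "nat \<Rightarrow> gen list" where
  "wB n = [GT, GS] @ replicate n GT @ [GSi, GTi]"

lemma wE_mat: "word_mat (wE m n) = mmul (mmul (mL (- int m)) (mT (int n))) (mL (int m))"
  by (simp add: wE_def word_mat_append word_mat_rep_T word_mat_rep_Ti gen_mat_simps mS_def mSi_def mT_def mL_def algebra_simps)
lemma wA_mat: "word_mat (wA n) = mL (- int n)"
  by (simp add: wA_def word_mat_append word_mat_rep_T gen_mat_simps mS_def mSi_def mT_def mL_def)
lemma wB_mat: "word_mat (wB n) = mmul (mmul (mT 1) (mL (- int n))) (mT (-1))"
  by (simp add: wB_def word_mat_append word_mat_rep_T gen_mat_simps mS_def mSi_def mT_def mL_def)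

lemma (in group) pow_one_if: "g \<in> carrier G \<Longrightarrow> ord g dvd n \<Longrightarrow> (inv g) [^] n = \<one>"
  by (simp add: nat_pow_inv pow_eq_id)

lemma (in group) wE_fix:
  assumes x: "x \<in> carrier G" and y: "y \<in> carrier G" and d: "ord (x \<otimes> inv (y [^] m)) dvd n"
  shows "word_act G (wE m n) (x,y) = (x,y)"
proof -
  let ?g = "x \<otimes> inv (y [^] m)"
  have g: "?g \<in> carrier G" using x y by simp
  have 1: "word_act G [GS] (x,y) = (inv y, x)" by (simp add: word_act_Cons word_act_Nil)
  have 2: "word_act G (replicate m GTi) (inv y, x) = (inv y, ?g)"
    using x y by (simp add: act_rep_Ti nat_pow_inv)
  have 3: "word_act G [GSi] (inv y, ?g) = (?g, y)" using y by (simp add: word_act_Cons word_act_Nil)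
  have 4: "word_act G (replicate n GT) (?g, y) = (?g, y)"
    using y g d by (simp add: act_rep_T pow_one_if)
  have 5: "word_act G [GS] (?g, y) = (inv y, ?g)" by (simp add: word_act_Cons word_act_Nil)
  have 6: "word_act G (replicate m GT) (inv y, ?g) = (inv y, x)"
    using x y by (simp add: act_rep_T m_assoc)
  have 7: "word_act G [GSi] (inv y, x) = (x, y)" using y by (simp add: word_act_Cons word_act_Nil)
  show ?thesis unfolding wE_def word_act_append 1 2 3 4 5 6 7 ..
qed

lemma (in group) wA_fix:
  assumes x: "x \<in> carrier G" and y: "y \<in> carrier G" and d: "ord y dvd n"
  shows "word_act G (wA n) (x,y) = (x,y)"
proof -
  have 1: "word_act G [GS] (x,y) = (inv y, x)" by (simp add: word_act_Cons word_act_Nil)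
  have 2: "word_act G (replicate n GT) (inv y, x) = (inv y, x)"
    using x y d by (simp add: act_rep_T pow_eq_id)
  have 3: "word_act G [GSi] (inv y, x) = (x, y)" using y by (simp add: word_act_Cons word_act_Nil)
  show ?thesis unfolding wA_def word_act_append 1 2 3 ..
qed

lemma (in group) wB_fix:
  assumes x: "x \<in> carrier G" and y: "y \<in> carrier G" and d: "ord (y \<otimes> x) dvd n"
  shows "word_act G (wB n) (x,y) = (x,y)"
proof -
  have 1: "word_act G [GSi, GTi] (x,y) = (y \<otimes> x, inv x)" by (simp add: word_act_Cons word_act_Nil)
  have 2: "word_act G (replicate n GT) (y \<otimes> x, inv x) = (y \<otimes> x, inv x)"
    using x y d by (simp add: act_rep_T pow_one_if)
  have 3: "word_act G [GT, GS] (y \<otimes> x, inv x) = (x, y)" using x y by (simp add: word_act_Cons word_act_Nil m_assoc)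
  show ?thesis unfolding wB_def word_act_append 1 2 3 ..
qed

lemma exists_j:
  fixes k :: nat and q r t :: int
  assumes cop: "coprime (int k) q" and qr: "coprime q r" and q: "q \<ge> 1" and r: "r \<ge> 1"
  shows "\<exists>j::nat. [int k * int j = t] (mod q) \<and> [int k * int j = 0] (mod r)"
proof -
  have "coprime (int k * r) q" using cop qr by (simp add: coprime_commute)
  then obtain u where u: "[int k * r * u = 1] (mod q)" using cong_solve_coprime_int by blast
  define j0 where "j0 = r * u * t"
  define j where "j = j0 mod (q * r)"
  have j0: "j \<ge> 0" using q r by (simp add: j_def)
  have jq: "[j = j0] (mod q)" unfolding j_def by (simp add: cong_def mod_mod_cancel)
  have jr: "[j = j0] (mod r)" unfolding j_def by (simp add: cong_def mod_mod_cancel)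
  have "[int k * j = int k * j0] (mod q)" using jq by (simp add: cong_scalar_left)
  moreover have "[int k * j0 = (int k * r * u) * t] (mod q)" by (simp add: j0_def algebra_simps)
  moreover have "[(int k * r * u) * t = 1 * t] (mod q)" using u by (intro cong_mult cong_refl)
  ultimately have 1: "[int k * j = t] (mod q)" by (metis cong_trans mult_1)
  have "[int k * j = int k * j0] (mod r)" using jr by (simp add: cong_scalar_left)
  moreover have "[int k * j0 = 0] (mod r)" by (simp add: j0_def cong_0_iff)
  ultimately have 2: "[int k * j = 0] (mod r)" by (metis cong_trans)
  show ?thesis using 1 2 j0 by (intro exI[of _ "nat j"]) simp
qed

lemma Rq:
  fixes Fx :: "gen list \<Rightarrow> bool" and C C' :: mat2 and q r \<delta> :: int and ka kb :: nat
    and wa wb :: "nat \<Rightarrow> gen list"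
  assumes app: "\<And>u v. Fx u \<Longrightarrow> Fx v \<Longrightarrow> Fx (u @ v)"
  and CC: "mmul C C' = mI" "mmul C' C = mI"
  and q: "q \<ge> 1" "r \<ge> 1" "coprime q r"
  and k: "coprime (int ka) q" "coprime (int kb) q" "coprime \<delta> q"
  and f1: "\<And>j. Fx (wa (ka * j))" "\<And>n. word_mat (wa n) = mmul (mmul C' (mT (int n))) C"
  and f2: "\<And>j. Fx (wb (kb * j))"
     "\<And>n. word_mat (wb n) = mmul (mmul C' (mmul (mmul (mL \<delta>) (mT (int n))) (mL (-\<delta>)))) C"
  and det: "[det2 M = 1] (mod q)"
  shows "\<exists>w. Fx w \<and> mcong q (word_mat w) M \<and> mcong r (word_mat w) mI"
proof -
  have CCl[simp]: "mmul C (mmul C' Y) = Y" "mmul C' (mmul C Y) = Y" for Y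
    by (simp_all add: mmul_assoc[symmetric] CC)
  define Good where "Good Z \<longleftrightarrow> (\<exists>w. Fx w \<and> mcong q (mmul (mmul C (word_mat w)) C') Z \<and> mcong r (word_mat w) mI)" for Z
  have fam: "Good (mmul (mmul D (mT t)) D')"
    if DD: "mmul D D' = mI" and kk: "coprime (int kk) q" and fx: "\<And>j. Fx (wf (kk * j))"
      and wm: "\<And>n. word_mat (wf n) = mmul (mmul C' (mmul (mmul D (mT (int n))) D')) C"
    for D D' t kk wf
  proof -
    obtain j where j: "[int kk * int j = t] (mod q)" "[int kk * int j = 0] (mod r)"
      using exists_j[OF kk q(3) q(1) q(2)] by blast
    let ?X = "mmul (mmul D (mT (int (kk * j)))) D'"
    have e1: "mmul (mmul C (word_mat (wf (kk*j)))) C' = ?X"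
      unfolding wm by (simp add: mmul_assoc CC)
    have ij: "int (kk * j) = int kk * int j" by simp
    have m1: "mcong q ?X (mmul (mmul D (mT t)) D')"
      unfolding ij using j(1) by (intro mcong_mmul mcong_refl mcong_mT)
    have "mcong r ?X (mmul (mmul D (mT 0)) D')"
      unfolding ij using j(2) by (intro mcong_mmul mcong_refl mcong_mT)
    then have "mcong r (mmul (mmul C' ?X) C) (mmul (mmul C' (mmul (mmul D (mT 0)) D')) C)"
      by (rule mcong_mmul[OF mcong_mmul[OF mcong_refl] mcong_refl])
    moreover have "mmul (mmul C' (mmul (mmul D (mT 0)) D')) C = mI"
    proof -
      have "mT 0 = mI" by (simp add: mT_def mI_def)
      then have "mmul (mmul C' (mmul (mmul D (mT 0)) D')) C = mmul C' (mmul (mmul D D') C)"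
        by (simp add: mmul_assoc)
      also have "\<dots> = mI" using DD CC by simp
      finally show ?thesis .
    qed
    ultimately have m2: "mcong r (word_mat (wf (kk*j))) mI" unfolding wm by simp
    show ?thesis unfolding Good_def using fx e1 m1 m2 by metis
  qed
  have mult: "Good (mmul A B)" if GA: "Good A" and GB: "Good B" for A B
  proof -
    obtain u where u: "Fx u" "mcong q (mmul (mmul C (word_mat u)) C') A" "mcong r (word_mat u) mI"
      using GA unfolding Good_def by blast
    obtain v where v: "Fx v" "mcong q (mmul (mmul C (word_mat v)) C') B" "mcong r (word_mat v) mI"
      using GB unfolding Good_def by blast
    have eq: "mmul (mmul C (word_mat (u @ v))) C' =
       mmul (mmul (mmul C (word_mat u)) C') (mmul (mmul C (word_mat v)) C')"
      by (simp add: word_mat_append mmul_assoc)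
    have "mcong q (mmul (mmul C (word_mat (u @ v))) C') (mmul A B)"
      unfolding eq using u v by (intro mcong_mmul)
    moreover have "mcong r (word_mat (u @ v)) (mmul mI mI)"
      unfolding word_mat_append using u v by (intro mcong_mmul)
    ultimately show ?thesis unfolding Good_def using app u v by fastforce
  qed
  have cg: "Good B" if "mcong q A B" "Good A" for A B
    using that unfolding Good_def by (meson mcong_trans)
  have gT: "Good (mT t)" for t
    using fam[of mI mI ka wa t] k f1 by simp
  have gU: "Good (mmul (mmul (mL \<delta>) (mT t)) (mL (-\<delta>)))" for t
    using fam[of "mL \<delta>" "mL (-\<delta>)" kb wb t] k f2 by (simp add: mL_def mI_def)
  have gL: "Good (mL s)" for s
    by (rule core_L[where Good=Good and q=q, OF mult cg gT gU k(3)])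
  have dC: "det2 C * det2 C' = 1" using arg_cong[OF CC(1), of det2] by (simp add: det2_mmul mI_def)
  have dd: "[det2 (mmul (mmul C M) C') = 1] (mod q)"
    using det dC by (simp add: det2_mmul) (metis mult.commute mult.left_commute mult_1_right)
  have "Good (mmul (mmul C M) C')"
    apply (rule core_all[where Good=Good and q=q])
    subgoal by (rule mult)
    subgoal by (rule cg)
    subgoal by (rule gT)
    subgoal by (rule gL)
    subgoal by (rule dd)
    done
  then obtain w where w: "Fx w" "mcong q (mmul (mmul C (word_mat w)) C') (mmul (mmul C M) C')"
      "mcong r (word_mat w) mI" unfolding Good_def by blast
  have "mcong q (mmul (mmul C' (mmul (mmul C (word_mat w)) C')) C) (mmul (mmul C' (mmul (mmul C M) C')) C)"
    by (rule mcong_mmul[OF mcong_mmul[OF mcong_refl w(2)] mcong_refl])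
  then have "mcong q (word_mat w) M" by (simp add: mmul_assoc CC)
  then show ?thesis using w by blast
qed

lemma fix_app: "word_act G u p = p \<Longrightarrow> word_act G v p = p \<Longrightarrow> word_act G (u @ v) p = p"
  by (simp add: word_act_append)

lemma coprime_nat_to_int:
  assumes "coprime (nat p) k" "p \<ge> 0"
  shows "coprime (int k) (p ^ e)"
proof -
  have "coprime (int (nat p)) (int k)" using assms(1) coprime_int_iff by blast
  moreover have "int (nat p) = p" using assms(2) by simp
  ultimately have "coprime p (int k)" by simp
  then show ?thesis by (simp add: coprime_commute)
qed

lemma Rpp:
  fixes G :: "('a, 'b) monoid_scheme" and x y :: 'a and p r :: int
  assumes orig: "regular_origami G x y"
    and H: "\<And>p::nat. Factorial_Ring.prime p \<Longrightarrow>
      coprime p (group.ord G y * group.ord G (y \<otimes>\<^bsub>G\<^esub> x))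
      \<or> (\<exists>m1 m2 :: nat. \<not> [m1 = m2] (mod p) \<and>
           coprime p (group.ord G (x \<otimes>\<^bsub>G\<^esub> inv\<^bsub>G\<^esub> (y [^]\<^bsub>G\<^esub> m1))
                    * group.ord G (x \<otimes>\<^bsub>G\<^esub> inv\<^bsub>G\<^esub> (y [^]\<^bsub>G\<^esub> m2))))"
    and p: "Factorial_Ring.prime p" and r: "r \<ge> 1" "coprime p r"
    and det: "[det2 M = 1] (mod (p^e))"
  shows "\<exists>w. word_act G w (x,y) = (x,y) \<and> mcong (p^e) (word_mat w) M \<and> mcong r (word_mat w) mI"
proof -
  interpret group G using orig by (simp add: regular_origami_def)
  have x: "x \<in> carrier G" and y: "y \<in> carrier G" using orig by (auto simp: regular_origami_def)
  have p0: "p > 0" using p by (simp add: prime_gt_0_int)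
  have q1: "p ^ e \<ge> 1" using p0 by (simp add: one_le_power)
  have qr: "coprime (p ^ e) r" using r(2) by simp
  have pn: "Factorial_Ring.prime (nat p)" using p by simp
  from H[OF pn] show ?thesis
  proof
    assume c: "coprime (nat p) (group.ord G y * group.ord G (y \<otimes>\<^bsub>G\<^esub> x))"
    have k1: "coprime (int (group.ord G y)) (p ^ e)" using c p0 by (intro coprime_nat_to_int) auto
    have k2: "coprime (int (group.ord G (y \<otimes>\<^bsub>G\<^esub> x))) (p ^ e)" using c p0 by (intro coprime_nat_to_int) auto
    show ?thesis
    proof (rule Rq[where Fx="\<lambda>w. word_act G w (x,y) = (x,y)" and C=mS and C'=mSi and \<delta>="-1"
          and ka="group.ord G y" and kb="group.ord G (y \<otimes>\<^bsub>G\<^esub> x)" and wa=wA and wb=wB, OF fix_app])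
      show "mmul mS mSi = mI" "mmul mSi mS = mI" by (simp_all add: mS_def mSi_def mI_def)
      show "1 \<le> p ^ e" "1 \<le> r" "coprime (p ^ e) r" using q1 r qr by auto
      show "coprime (int (group.ord G y)) (p ^ e)" "coprime (int (group.ord G (y \<otimes>\<^bsub>G\<^esub> x))) (p ^ e)" "coprime (-1) (p ^ e)"
        using k1 k2 by auto
      show "word_act G (wA (group.ord G y * j)) (x, y) = (x, y)" for j using wA_fix[OF x y] by simp
      show "word_act G (wB (group.ord G (y \<otimes>\<^bsub>G\<^esub> x) * j)) (x, y) = (x, y)" for j using wB_fix[OF x y] by simp
      show "word_mat (wA n) = mmul (mmul mSi (mT (int n))) mS" for n
        by (simp add: wA_mat mSi_def mS_def mT_def mL_def)
      show "word_mat (wB n) = mmul (mmul mSi (mmul (mmul (mL (-1)) (mT (int n))) (mL (- (-1))))) mS" for n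
        by (simp add: wB_mat mSi_def mS_def mT_def mL_def)
      show "[det2 M = 1] (mod p ^ e)" by (rule det)
    qed
  next
    assume "\<exists>m1 m2 :: nat. \<not> [m1 = m2] (mod (nat p)) \<and>
           coprime (nat p) (group.ord G (x \<otimes>\<^bsub>G\<^esub> inv\<^bsub>G\<^esub> (y [^]\<^bsub>G\<^esub> m1))
                    * group.ord G (x \<otimes>\<^bsub>G\<^esub> inv\<^bsub>G\<^esub> (y [^]\<^bsub>G\<^esub> m2)))"
    then obtain m1 m2 :: nat where mm: "\<not> [m1 = m2] (mod (nat p))"
      and c: "coprime (nat p) (group.ord G (x \<otimes>\<^bsub>G\<^esub> inv\<^bsub>G\<^esub> (y [^]\<^bsub>G\<^esub> m1)) * group.ord G (x \<otimes>\<^bsub>G\<^esub> inv\<^bsub>G\<^esub> (y [^]\<^bsub>G\<^esub> m2)))" by blast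
    have k1: "coprime (int (group.ord G (x \<otimes>\<^bsub>G\<^esub> inv\<^bsub>G\<^esub> (y [^]\<^bsub>G\<^esub> m1)))) (p ^ e)" using c p0 by (intro coprime_nat_to_int) auto
    have k2: "coprime (int (group.ord G (x \<otimes>\<^bsub>G\<^esub> inv\<^bsub>G\<^esub> (y [^]\<^bsub>G\<^esub> m2)))) (p ^ e)" using c p0 by (intro coprime_nat_to_int) auto
    have "\<not> [int m1 = int m2] (mod p)" using mm p0 cong_int_iff[of m1 m2 "nat p"] by simp
    then have "\<not> p dvd (int m1 - int m2)" by (simp add: cong_iff_dvd_diff)
    then have "coprime p (int m1 - int m2)" using p by (rule prime_imp_coprime[rotated])
    then have k3: "coprime (int m1 - int m2) (p ^ e)" by (simp add: coprime_commute)
    show ?thesis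
    proof (rule Rq[where Fx="\<lambda>w. word_act G w (x,y) = (x,y)" and C="mL (int m1)" and C'="mL (- int m1)"
          and \<delta>="int m1 - int m2"
          and ka="group.ord G (x \<otimes>\<^bsub>G\<^esub> inv\<^bsub>G\<^esub> (y [^]\<^bsub>G\<^esub> m1))" and kb="group.ord G (x \<otimes>\<^bsub>G\<^esub> inv\<^bsub>G\<^esub> (y [^]\<^bsub>G\<^esub> m2))" and wa="wE m1" and wb="wE m2", OF fix_app])
      show "mmul (mL (int m1)) (mL (- int m1)) = mI" "mmul (mL (- int m1)) (mL (int m1)) = mI"
        by (simp_all add: mL_def mI_def)
      show "1 \<le> p ^ e" "1 \<le> r" "coprime (p ^ e) r" using q1 r qr by auto
      show "coprime (int (group.ord G (x \<otimes>\<^bsub>G\<^esub> inv\<^bsub>G\<^esub> (y [^]\<^bsub>G\<^esub> m1)))) (p ^ e)" "coprime (int (group.ord G (x \<otimes>\<^bsub>G\<^esub> inv\<^bsub>G\<^esub> (y [^]\<^bsub>G\<^esub> m2)))) (p ^ e)"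
        "coprime (int m1 - int m2) (p ^ e)"
        using k1 k2 k3 by auto
      show "word_act G (wE m1 (group.ord G (x \<otimes>\<^bsub>G\<^esub> inv\<^bsub>G\<^esub> (y [^]\<^bsub>G\<^esub> m1)) * j)) (x, y) = (x, y)" for j using wE_fix[OF x y] by simp
      show "word_act G (wE m2 (group.ord G (x \<otimes>\<^bsub>G\<^esub> inv\<^bsub>G\<^esub> (y [^]\<^bsub>G\<^esub> m2)) * j)) (x, y) = (x, y)" for j using wE_fix[OF x y] by simp
      show "word_mat (wE m1 n) = mmul (mmul (mL (- int m1)) (mT (int n))) (mL (int m1))" for n
        by (simp add: wE_mat)
      show "word_mat (wE m2 n) = mmul (mmul (mL (- int m1)) (mmul (mmul (mL (int m1 - int m2)) (mT (int n)))
           (mL (- (int m1 - int m2))))) (mL (int m1))" for n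
        by (simp add: wE_mat mT_def mL_def algebra_simps)
      show "[det2 M = 1] (mod p ^ e)" by (rule det)
    qed
  qed
qed

lemma Rall:
  fixes G :: "('a, 'b) monoid_scheme" and x y :: 'a and n :: int
  assumes orig: "regular_origami G x y"
    and H: "\<And>p::nat. Factorial_Ring.prime p \<Longrightarrow>
      coprime p (group.ord G y * group.ord G (y \<otimes>\<^bsub>G\<^esub> x))
      \<or> (\<exists>m1 m2 :: nat. \<not> [m1 = m2] (mod p) \<and>
           coprime p (group.ord G (x \<otimes>\<^bsub>G\<^esub> inv\<^bsub>G\<^esub> (y [^]\<^bsub>G\<^esub> m1))
                    * group.ord G (x \<otimes>\<^bsub>G\<^esub> inv\<^bsub>G\<^esub> (y [^]\<^bsub>G\<^esub> m2))))"
  shows "n \<ge> 1 \<Longrightarrow> r \<ge> 1 \<Longrightarrow> coprime n r \<Longrightarrow> [det2 M = 1] (mod n) \<Longrightarrow>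
    \<exists>w. word_act G w (x,y) = (x,y) \<and> mcong n (word_mat w) M \<and> mcong r (word_mat w) mI"
proof (induction n arbitrary: r M rule: measure_induct_rule[where f="\<lambda>n. nat n"])
  case (less n)
  show ?case
  proof (cases "n = 1")
    case True
    show ?thesis using True by (intro exI[of _ "[]"]) (simp add: word_act_Nil)
  next
    case False
    with less.prems have n1: "n > 1" by simp
    obtain p where p: "p dvd n" "Factorial_Ring.prime p"
      using prime_divisor_exists[of n] n1 by auto
    obtain n' where n': "n = p ^ multiplicity p n * n'" "\<not> p dvd n'"
      by (rule multiplicity_decompose'[of n p]) (use n1 p(2) in \<open>auto simp: prime_def\<close>)
    define e where "e = multiplicity p n"
    have p0: "p > 1" using p(2) by (simp add: prime_gt_1_int)
    have e0: "e \<noteq> 0"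
    proof
      assume "e = 0"
      then have "n = n'" using n'(1) by (simp add: e_def)
      then show False using p(1) n'(2) by simp
    qed
    have pe: "p ^ e \<ge> p" using p0 e0 by (intro self_le_power) auto
    have nn: "n = p ^ e * n'" using n' by (simp add: e_def)
    have ppos: "p ^ e > 0" using p0 by simp
    have "0 < p ^ e * n'" using nn n1 by simp
    then have n'pos: "n' > 0" using ppos by (rule zero_less_mult_pos)
    have "2 * n' \<le> p ^ e * n'" using pe p0 n'pos by (intro mult_right_mono) auto
    then have n'lt: "n' < n" using nn n'pos by simp
    have cpn': "coprime p n'" using p(2) n'(2) by (rule prime_imp_coprime)
    have cpr: "coprime p r" using coprime_divisors[OF p(1) dvd_refl less.prems(3)] .
    have cn'r: "coprime n' r" using less.prems(3) nn
      by (metis coprime_mult_left_iff)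
    have cn'pe: "coprime n' (p ^ e)" using cpn' by (simp add: coprime_commute)
    have d1: "[det2 M = 1] (mod p ^ e)" using less.prems(4) nn by (metis cong_dvd_modulus dvd_triv_left)
    have d2: "[det2 M = 1] (mod n')" using less.prems(4) nn by (metis cong_dvd_modulus dvd_triv_right)
    have rn1: "r * n' \<ge> 1" using less.prems(2) n'pos mult_mono[of 1 r 1 n'] by simp
    have rp1: "r * p ^ e \<ge> 1" using less.prems(2) ppos mult_mono[of 1 r 1 "p^e"] by simp
    obtain w1 where w1: "word_act G w1 (x,y) = (x,y)" "mcong (p^e) (word_mat w1) M" "mcong (r * n') (word_mat w1) mI"
      using Rpp[OF orig H p(2) rn1, of M e] cpr cpn' d1 by auto
    obtain w2 where w2: "word_act G w2 (x,y) = (x,y)" "mcong n' (word_mat w2) M" "mcong (r * p^e) (word_mat w2) mI"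
      using less.IH[of n' "r * p^e" M] n'lt n'pos rp1 cn'r cn'pe d2 by auto
    have a: "mcong (p^e) (word_mat (w1 @ w2)) (mmul M mI)"
      unfolding word_mat_append using w1(2) mcong_dvd[OF w2(3)] by (intro mcong_mmul) auto
    have b: "mcong n' (word_mat (w1 @ w2)) (mmul mI M)"
      unfolding word_mat_append using w2(2) mcong_dvd[OF w1(3)] by (intro mcong_mmul) auto
    have c: "mcong r (word_mat (w1 @ w2)) (mmul mI mI)"
      unfolding word_mat_append using mcong_dvd[OF w2(3)] mcong_dvd[OF w1(3)] by (intro mcong_mmul) auto
    have "coprime (p ^ e) n'" using cpn' by simp
    then have "mcong n (word_mat (w1 @ w2)) M" using a b nn mcong_coprime by fastforce
    then show ?thesis using c w1(1) w2(1) by (intro exI[of _ "w1 @ w2"]) (simp add: word_act_append)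
  qed
qed

theorem mainTheorem2:
  fixes G :: "('a, 'b) monoid_scheme" and x y :: 'a
  assumes "regular_origami G x y"
    and "\<And>p::nat. Factorial_Ring.prime p \<Longrightarrow>
      coprime p (group.ord G y * group.ord G (y \<otimes>\<^bsub>G\<^esub> x))
      \<or> (\<exists>m1 m2 :: nat. \<not> [m1 = m2] (mod p) \<and>
           coprime p (group.ord G (x \<otimes>\<^bsub>G\<^esub> inv\<^bsub>G\<^esub> (y [^]\<^bsub>G\<^esub> m1))
                    * group.ord G (x \<otimes>\<^bsub>G\<^esub> inv\<^bsub>G\<^esub> (y [^]\<^bsub>G\<^esub> m2))))"
  shows "totally_non_congruence (veech_group G x y)"
  unfolding totally_non_congruence_def
proof (intro allI impI)
  fix n :: int and a b c e :: int
  assume n: "n \<ge> 1" and d: "[a * e - b * c = 1] (mod n)"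
  have "[det2 (a,b,c,e) = 1] (mod n)" using d by simp
  then obtain w where w: "word_act G w (x,y) = (x,y)" "mcong n (word_mat w) (a,b,c,e)"
    using Rall[OF assms(1) assms(2), of n 1 "(a,b,c,e)"] n by auto
  obtain a1 b1 c1 d1 where wm: "word_mat w = (a1,b1,c1,d1)" by (cases "word_mat w") auto
  have dt: "a1 * d1 - b1 * c1 = 1" using det_word[of w] wm by simp
  have eqv: "origami_equiv G (word_act G w (x,y)) (x,y)"
    unfolding origami_equiv_def w(1) using id_iso[of G] by (intro bexI[of _ id]) auto
  have "(a1,b1,c1,d1) \<in> veech_group G x y"
    unfolding veech_group_def SL2Z_def using dt eqv wm by auto
  then show "\<exists>(a1,b1,c1,d1)\<in>veech_group G x y. [a1 = a] (mod n) \<and> [b1 = b] (mod n) \<and> [c1 = c] (mod n) \<and> [d1 = e] (mod n)"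
    using w(2) wm by auto
qed

end
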